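(* Work in IST. Let $\varepsilon>0$ be infinitesimal, $f:\mathbb{R}\to\mathbb{R}$ $C^1$-limited, $h:\mathbb{R}^2\to\mathbb{R}$ $C^1$-limited and never vanishing, and $g:\mathbb{R}^2\to\mathbb{R}$ of class $C^1$ with $\inf g>0$ and $\inf g$ not infinitesimal. Consider $$\frac{dx}{dt}=h(x,y),\qquad \frac{dy}{dt}=\frac{1}{\varepsilon}g(x,y)\big(f(x)-y\big).$$ Let $(x_0,y_0)$ be a limited point not in the halo of the graph of $f$, and let $(x(t),y(t))$ be the solution with $(x(0),y(0))=(x_0,y_0)$. Then there exists $t^*>0$ such that: (1) $t^*\sim0$; (2) $x(t)\sim x_0$ for all $t\in[0,t^*]$; (3) $y(t^* )\sim f(x_0)$; (4) for every limited $t>t^*$, $y(t)\sim f(x(t))$.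
   Context: Nonstandard vocabulary (IST): infinitesimal = absolute value smaller than every standard positive real; limited = bounded in absolute value by some standard real; $a\sim b$ means $a-b$ infinitesimal; the halo of a set $E\subset\mathbb{R}^2$ is the set of points infinitely close to some point of $E$. A function is $C^1$-limited if it and its (partial) derivatives are bounded by a limited constant. *)

theory Defs
  imports "HOL-Analysis.Analysis"
begin

definition C1_bounded1 :: "(real \<Rightarrow> real) \<Rightarrow> real \<Rightarrow> bool" where
  "C1_bounded1 f K \<longleftrightarrow> (\<exists>f'. continuous_on UNIV f' \<and>
     (\<forall>u. (f has_real_derivative f' u) (at u)) \<and>
     (\<forall>u. \<bar>f u\<bar> \<le> K \<and> \<bar>f' u\<bar> \<le> K))"

definition C1_2 :: "(real \<times> real \<Rightarrow> real) \<Rightarrow> (real \<times> real \<Rightarrow> real) \<Rightarrow> (real \<times> real \<Rightarrow> real) \<Rightarrow> bool" where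
  "C1_2 h hx hy \<longleftrightarrow> continuous_on UNIV hx \<and> continuous_on UNIV hy \<and>
     (\<forall>p. (h has_derivative (\<lambda>(u, v). hx p * u + hy p * v)) (at p))"

definition C1_bounded2 :: "(real \<times> real \<Rightarrow> real) \<Rightarrow> real \<Rightarrow> bool" where
  "C1_bounded2 h K \<longleftrightarrow> (\<exists>hx hy. C1_2 h hx hy \<and>
     (\<forall>p. \<bar>h p\<bar> \<le> K \<and> \<bar>hx p\<bar> \<le> K \<and> \<bar>hy p\<bar> \<le> K))"

definition C1_fun2 :: "(real \<times> real \<Rightarrow> real) \<Rightarrow> bool" where
  "C1_fun2 g \<longleftrightarrow> (\<exists>gx gy. C1_2 g gx gy)"

end

theory Submission imports Defs
begin

lemma comparison:
  fixes u u' p p' :: "real \<Rightarrow> real"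
  assumes du: "\<And>t. t \<ge> 0 \<Longrightarrow> (u has_real_derivative u' t) (at t within {0..})"
    and dp: "\<And>t. t \<ge> 0 \<Longrightarrow> (p has_real_derivative p' t) (at t within {0..})"
    and init: "u 0 < p 0"
    and cross: "\<And>t. t > 0 \<Longrightarrow> u t = p t \<Longrightarrow> u' t < p' t"
    and t0: "t \<ge> 0"
  shows "u t < p t"
proof (rule ccontr)
  assume "\<not> u t < p t"
  define \<psi> where "\<psi> s = u s - p s" for s
  have dpsi: "(\<psi> has_real_derivative (u' s - p' s)) (at s within {0..})" if "s \<ge> 0" for s
    unfolding \<psi>_def using du[OF that] dp[OF that] by (intro derivative_intros)
  have cont0: "continuous_on {0..} \<psi>"
    using dpsi by (meson DERIV_continuous atLeast_iff continuous_at_imp_continuous_on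
        continuous_on_eq_continuous_within)
  have cont: "continuous_on {0..b} \<psi>" for b
    using cont0 by (rule continuous_on_subset) auto
  define S where "S = {0..t} \<inter> \<psi> -` {0..}"
  have clS: "closed S" unfolding S_def
    by (rule continuous_closed_preimage[OF cont]) auto
  have tS: "t \<in> S" unfolding S_def \<psi>_def using t0 \<open>\<not> u t < p t\<close> by auto
  have bdd: "bdd_below S" unfolding S_def by (rule bdd_belowI[of _ 0]) auto
  define t1 where "t1 = Inf S"
  have t1S: "t1 \<in> S" unfolding t1_def using closed_contains_Inf[OF _ bdd clS] tS by blast
  have low: "t1 \<le> s" if "s \<in> S" for s unfolding t1_def using cInf_lower[OF that bdd] .
  have neg: "\<psi> s < 0" if "0 \<le> s" "s < t1" for s
  proof (rule ccontr)
    assume "\<not> \<psi> s < 0"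
    hence "s \<in> S" using that t1S unfolding S_def by auto
    thus False using low that by force
  qed
  have psi0: "\<psi> 0 < 0" using init unfolding \<psi>_def by simp
  have t1pos: "t1 > 0"
  proof -
    have "t1 \<ge> 0" "\<psi> t1 \<ge> 0" using t1S unfolding S_def by auto
    thus ?thesis using psi0 by (cases "t1 = 0") auto
  qed
  have t1le: "t1 \<le> t" using t1S unfolding S_def by auto
  have z1: "\<psi> t1 = 0"
  proof (rule ccontr)
    assume "\<psi> t1 \<noteq> 0"
    hence "\<psi> t1 > 0" using t1S unfolding S_def by auto
    then obtain s where s: "0 \<le> s" "s \<le> t1" "\<psi> s = 0"
      using IVT'[of \<psi> 0 0 t1, OF _ _ _ cont] psi0 t1pos by auto
    hence "s < t1" using \<open>\<psi> t1 > 0\<close> by (cases "s = t1") auto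
    thus False using neg[OF s(1) \<open>s<t1\<close>] s(3) by simp
  qed
  have "u t1 = p t1" using z1 unfolding \<psi>_def by simp
  hence lt: "u' t1 - p' t1 < 0" using cross t1pos by auto
  have "(\<psi> has_real_derivative (u' t1 - p' t1)) (at t1 within {0<..})"
    using dpsi[of t1] t1pos by (auto intro: DERIV_subset)
  hence "DERIV \<psi> t1 :> (u' t1 - p' t1)"
    using at_within_open[of t1 "{0<..}"] t1pos by auto
  then obtain d where d: "d > 0" "\<forall>h>0. h < d \<longrightarrow> \<psi> t1 < \<psi> (t1 - h)"
    using DERIV_neg_dec_left[OF _ lt] by blast
  define hh where "hh = min (d/2) (t1/2)"
  have "\<psi> (t1 - hh) > 0" using d z1 t1pos unfolding hh_def by auto
  moreover have "\<psi> (t1 - hh) < 0" by (rule neg) (use d t1pos in \<open>auto simp: hh_def\<close>)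
  ultimately show False by simp
qed

lemma cross_ineq:
  fixes \<epsilon> G c zz F B a M E k :: real
  assumes "\<epsilon>>0" "c>0" "c \<le> G" "zz > 0" "\<bar>F\<bar> \<le> B" "a = c/\<epsilon>" "zz = M*E + B/a + k" "k>0"
  shows "(1/\<epsilon>)*G*(-zz) - F < -a*M*E"
proof -
  have apos: "a > 0" using assms by simp
  have "c*zz \<le> G*zz" using assms by (intro mult_right_mono) auto
  hence "c*zz/\<epsilon> \<le> G*zz/\<epsilon>" using assms(1) by (intro divide_right_mono) auto
  hence "a*zz \<le> (1/\<epsilon>)*G*zz" using assms(6) by simp
  moreover have "-F \<le> B" using assms(5) by linarith
  ultimately have "(1/\<epsilon>)*G*(-zz) - F \<le> -a*zz + B" by simp
  also have "-a*zz + B = -a*M*E - a*k" using apos assms(7) by (simp add: field_simps)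
  also have "\<dots> < -a*M*E" using apos assms by simp
  finally show ?thesis .
qed
theorem mainTheorem9:
  fixes K c R d \<eta> T :: real
  assumes "c > 0" and "d > 0" and "\<eta> > 0"
  shows "\<exists>\<delta>>0. \<forall>(\<epsilon>::real) (f::real \<Rightarrow> real) (h::real \<times> real \<Rightarrow> real)
      (g::real \<times> real \<Rightarrow> real) (x0::real) (y0::real) (x::real \<Rightarrow> real) (y::real \<Rightarrow> real).
      0 < \<epsilon> \<and> \<epsilon> < \<delta> \<and>
      C1_bounded1 f K \<and> C1_bounded2 h K \<and> (\<forall>p. h p \<noteq> 0) \<and>
      C1_fun2 g \<and> (\<forall>p. c \<le> g p) \<and>
      \<bar>x0\<bar> \<le> R \<and> \<bar>y0\<bar> \<le> R \<and> (\<forall>u. d \<le> dist (x0, y0) (u, f u)) \<and>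
      x 0 = x0 \<and> y 0 = y0 \<and>
      (\<forall>t\<ge>0. (x has_real_derivative h (x t, y t)) (at t within {0..}) \<and>
              (y has_real_derivative (1 / \<epsilon>) * g (x t, y t) * (f (x t) - y t)) (at t within {0..}))
      \<longrightarrow> (\<exists>ts>0. ts < \<eta> \<and>
             (\<forall>t\<in>{0..ts}. \<bar>x t - x0\<bar> \<le> \<eta>) \<and>
             \<bar>y ts - f x0\<bar> \<le> \<eta> \<and>
             (\<forall>t. ts < t \<and> t \<le> T \<longrightarrow> \<bar>y t - f (x t)\<bar> \<le> \<eta>))"
proof -
  define L where "L = 4*(\<bar>R\<bar>+\<bar>K\<bar>+1)/(c*\<eta>)"
  define D where "D = K*K+K+1"
  have Dsq: "D = (K+1/2)^2 + 3/4" unfolding D_def by (simp add: power2_eq_square algebra_simps)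
  have Dpos: "D > 0" unfolding Dsq by (simp add: add_nonneg_pos)
  have Lpos: "L > 0" unfolding L_def using assms by (intro divide_pos_pos) auto
  define \<delta> where "\<delta> = min (\<eta>/(4*L*D)) (\<eta>*c/(4*(K*K+1)))"
  have KK1: "K*K+1 > 0" by (simp add: add_nonneg_pos)
  have dpos: "\<delta> > 0" unfolding \<delta>_def using assms Lpos Dpos KK1
    by (simp add: divide_pos_pos mult_pos_pos)
  have "\<forall>(\<epsilon>::real) (f::real \<Rightarrow> real) (h::real \<times> real \<Rightarrow> real)
      (g::real \<times> real \<Rightarrow> real) (x0::real) (y0::real) (x::real \<Rightarrow> real) (y::real \<Rightarrow> real).
      0 < \<epsilon> \<and> \<epsilon> < \<delta> \<and>
      C1_bounded1 f K \<and> C1_bounded2 h K \<and> (\<forall>p. h p \<noteq> 0) \<and>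
      C1_fun2 g \<and> (\<forall>p. c \<le> g p) \<and>
      \<bar>x0\<bar> \<le> R \<and> \<bar>y0\<bar> \<le> R \<and> (\<forall>u. d \<le> dist (x0, y0) (u, f u)) \<and>
      x 0 = x0 \<and> y 0 = y0 \<and>
      (\<forall>t\<ge>0. (x has_real_derivative h (x t, y t)) (at t within {0..}) \<and>
              (y has_real_derivative (1 / \<epsilon>) * g (x t, y t) * (f (x t) - y t)) (at t within {0..}))
      \<longrightarrow> (\<exists>ts>0. ts < \<eta> \<and>
             (\<forall>t\<in>{0..ts}. \<bar>x t - x0\<bar> \<le> \<eta>) \<and>
             \<bar>y ts - f x0\<bar> \<le> \<eta> \<and>
             (\<forall>t. ts < t \<and> t \<le> T \<longrightarrow> \<bar>y t - f (x t)\<bar> \<le> \<eta>))"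
  proof (intro allI impI, elim conjE)
    fix \<epsilon> f h g x0 y0 x y
    assume ep: "0 < \<epsilon>" "\<epsilon> < \<delta>" and fC: "C1_bounded1 f K" and hC: "C1_bounded2 h K"
      and "\<forall>p. h p \<noteq> 0" "C1_fun2 g" and gc: "\<forall>p. c \<le> g p"
      and x0R: "\<bar>x0\<bar> \<le> R" and y0R: "\<bar>y0\<bar> \<le> R" and "\<forall>u. d \<le> dist (x0, y0) (u, f u)"
      and x00: "x 0 = x0" and y00: "y 0 = y0"
      and ode: "\<forall>t\<ge>0. (x has_real_derivative h (x t, y t)) (at t within {0..}) \<and>
              (y has_real_derivative (1 / \<epsilon>) * g (x t, y t) * (f (x t) - y t)) (at t within {0..})"
    obtain f' where fd: "\<And>u. (f has_real_derivative f' u) (at u)"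
      and fb: "\<And>u. \<bar>f u\<bar> \<le> K" and f'b: "\<And>u. \<bar>f' u\<bar> \<le> K"
      using fC unfolding C1_bounded1_def by blast
    have hb: "\<And>p. \<bar>h p\<bar> \<le> K" using hC unfolding C1_bounded2_def by blast
    have K0: "K \<ge> 0" using fb[of 0] by linarith
    have dx: "\<And>t. t \<ge> 0 \<Longrightarrow> (x has_real_derivative h (x t, y t)) (at t within {0..})"
      using ode by blast
    have dy: "\<And>t. t \<ge> 0 \<Longrightarrow> (y has_real_derivative (1 / \<epsilon>) * g (x t, y t) * (f (x t) - y t)) (at t within {0..})"
      using ode by blast
    have flip: "\<bar>f a - f b\<bar> \<le> K * \<bar>a - b\<bar>" for a b
      using field_differentiable_bound[of UNIV f f' K a b] fd f'b by auto
    have xlip: "\<bar>x t - x0\<bar> \<le> K * t" if "t \<ge> 0" for t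
    proof -
      have "norm (x t - x 0) \<le> K * norm (t - 0)"
        by (rule field_differentiable_bound[of "{0..}" x "\<lambda>t. h (x t, y t)" K])
           (use dx hb that in auto)
      thus ?thesis using that x00 by simp
    qed
    define z where "z t = y t - f (x t)" for t
    define u' where "u' t = (1/\<epsilon>)*g(x t,y t)*(f(x t) - y t) - f'(x t)*h(x t,y t)" for t
    have dz: "(z has_real_derivative u' t) (at t within {0..})" if "t \<ge> 0" for t
      unfolding z_def u'_def
      by (rule DERIV_diff[OF dy[OF that] DERIV_chain2[OF fd dx[OF that]]])
    have dmz: "((\<lambda>t. - z t) has_real_derivative - u' t) (at t within {0..})" if "t \<ge> 0" for t
      using dz[OF that] by (intro derivative_intros)
    define a where "a = c/\<epsilon>"
    have apos: "a > 0" unfolding a_def using ep assms by simp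
    define M where "M = \<bar>z 0\<bar>"
    define B where "B = K*K"
    define k where "k = \<eta>/4"
    have kpos: "k > 0" unfolding k_def using assms by simp
    define p where "p t = M*exp(-a*t) + B/a + k" for t
    define p' where "p' t = -a*M*exp(-a*t)" for t
    have dp: "(p has_real_derivative p' t) (at t within {0..})" for t
      unfolding p_def p'_def by (auto intro!: derivative_eq_intros)
    have ppos: "p t > 0" for t
      unfolding p_def M_def B_def using kpos apos by (intro add_nonneg_pos add_nonneg_nonneg) auto
    have Fb: "\<bar>f'(x t)*h(x t,y t)\<bar> \<le> B" for t
      unfolding B_def abs_mult using f'b hb K0 by (intro mult_mono) auto
    have Ba: "B/a \<ge> 0" unfolding B_def using apos by simp
    have p0: "p 0 = M + B/a + k" unfolding p_def by simp
    have c1: "z t < p t" if "t \<ge> 0" for t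
    proof (rule comparison[OF dz dp])
      show "z 0 < p 0" using p0 Ba kpos abs_ge_self[of "z 0"] unfolding M_def by linarith
      fix s :: real assume s: "s > 0" "z s = p s"
      have "u' s = (1/\<epsilon>)*g(x s,y s)*(- z s) - f'(x s)*h(x s,y s)"
        unfolding u'_def z_def by simp
      also have "\<dots> < p' s" unfolding p'_def
        by (rule cross_ineq[where c=c and B=B and a=a and k=k])
           (use ep assms gc s ppos[of s] Fb[of s] kpos in \<open>auto simp: a_def p_def\<close>)
      finally show "u' s < p' s" .
    qed (use that in auto)
    have c2: "- z t < p t" if "t \<ge> 0" for t
    proof (rule comparison[OF dmz dp])
      show "- z 0 < p 0" using p0 Ba kpos abs_ge_minus_self[of "z 0"] unfolding M_def by linarith
      fix s :: real assume s: "s > 0" "- z s = p s"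
      have "- u' s = (1/\<epsilon>)*g(x s,y s)*(- (- z s)) - (- (f'(x s)*h(x s,y s)))"
        unfolding u'_def z_def by (simp add: algebra_simps flip: add_divide_distrib)
      also have "\<dots> < p' s" unfolding p'_def
        by (rule cross_ineq[where c=c and B=B and a=a and k=k])
           (use ep assms gc s ppos[of s] Fb[of s] kpos in \<open>auto simp: a_def p_def\<close>)
      finally show "- u' s < p' s" .
    qed (use that in auto)
    have zb: "\<bar>z t\<bar> \<le> M*exp(-a*t) + B/a + k" if "t \<ge> 0" for t
      using c1[OF that] c2[OF that] unfolding p_def by linarith
    define ts where "ts = \<epsilon>*L"
    have tspos: "ts > 0" unfolding ts_def using ep Lpos by simp
    have "\<epsilon> * (L*D) < \<delta> * (L*D)" using ep Lpos Dpos by (intro mult_strict_right_mono) auto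
    also have "\<delta> * (L*D) \<le> \<eta>/(4*L*D) * (L*D)" unfolding \<delta>_def using Lpos Dpos
      by (intro mult_right_mono) auto
    also have "\<dots> = \<eta>/4" using Lpos Dpos by (simp add: field_simps)
    finally have tsD: "ts * D < \<eta>/4" unfolding ts_def by (simp add: mult.assoc)
    have D1: "1 \<le> D" "K \<le> D" "K*K \<le> D" unfolding D_def using K0 by auto
    have "ts*1 \<le> ts*D" using tspos D1(1) by (intro mult_left_mono) auto
    hence ts1: "ts < \<eta>/4" using tsD by simp
    have "K*ts \<le> D*ts" using tspos D1(2) by (intro mult_right_mono) auto
    hence ts2: "K*ts \<le> \<eta>/4" using tsD by (simp add: mult.commute)
    have "K*K*ts \<le> D*ts" using tspos D1(3) by (intro mult_right_mono) auto
    hence ts3: "K*K*ts \<le> \<eta>/4" using tsD by (simp add: mult.commute)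
    have "B/a = K*K*\<epsilon>/c" unfolding B_def a_def by simp
    also have "\<dots> \<le> K*K*(\<eta>*c/(4*(K*K+1)))/c"
      using ep \<open>\<epsilon> < \<delta>\<close> assms unfolding \<delta>_def
      by (intro divide_right_mono mult_left_mono) auto
    also have "\<dots> = \<eta>/4 * (K*K/(K*K+1))" using assms KK1 by (simp add: divide_simps)
    also have "\<dots> \<le> \<eta>/4 * 1" using assms KK1
      by (intro mult_left_mono) (auto simp: divide_simps)
    finally have Bab: "B/a \<le> \<eta>/4" by simp
    have Mb: "M \<le> \<bar>R\<bar>+\<bar>K\<bar>" unfolding M_def z_def using x00 y00 y0R fb[of x0] by auto
    have Meb: "M*exp(-a*t) \<le> \<eta>/4" if "t \<ge> ts" for t
    proof -
      have acL: "a*ts = c*L" unfolding a_def ts_def using ep by simp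
      have "exp(-a*t) \<le> exp(-a*ts)" using that apos by simp
      also have "exp(-a*ts) = 1/exp(c*L)" using acL by (simp add: exp_minus field_simps)
      also have "\<dots> \<le> 1/(c*L)"
      proof (rule divide_left_mono)
        have "1 + c*L \<le> exp(c*L)" by (rule exp_ge_add_one_self)
        thus "c*L \<le> exp(c*L)" by linarith
        show "0 \<le> (1::real)" by simp
        show "0 < exp(c*L) * (c*L)" using assms Lpos by simp
      qed
      finally have "M*exp(-a*t) \<le> M*(1/(c*L))" using Mb M_def
        by (intro mult_left_mono) auto
      also have "\<dots> = M*\<eta>/(4*(\<bar>R\<bar>+\<bar>K\<bar>+1))" unfolding L_def using assms abs_ge_zero[of R] abs_ge_zero[of K] by (simp add: divide_simps)
      also have "\<dots> \<le> (\<bar>R\<bar>+\<bar>K\<bar>+1)*\<eta>/(4*(\<bar>R\<bar>+\<bar>K\<bar>+1))"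
        using Mb assms by (intro divide_right_mono mult_right_mono) auto
      also have "\<dots> = \<eta>/4" using abs_ge_zero[of R] abs_ge_zero[of K] by (simp add: divide_simps)
      finally show ?thesis .
    qed
    show "\<exists>ts>0. ts < \<eta> \<and>
             (\<forall>t\<in>{0..ts}. \<bar>x t - x0\<bar> \<le> \<eta>) \<and>
             \<bar>y ts - f x0\<bar> \<le> \<eta> \<and>
             (\<forall>t. ts < t \<and> t \<le> T \<longrightarrow> \<bar>y t - f (x t)\<bar> \<le> \<eta>)"
    proof (intro exI[of _ ts] conjI ballI allI impI)
      show "0 < ts" "ts < \<eta>" using tspos ts1 assms by auto
      fix t assume "t \<in> {0..ts}"
      hence "K*t \<le> K*ts" using K0 by (intro mult_left_mono) auto
      thus "\<bar>x t - x0\<bar> \<le> \<eta>" using xlip[of t] \<open>t \<in> {0..ts}\<close> ts2 assms by auto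
    next
      have "\<bar>x ts - x0\<bar> \<le> K*ts" using xlip tspos by auto
      hence "K*\<bar>x ts - x0\<bar> \<le> K*(K*ts)" using K0 by (intro mult_left_mono) auto
      hence "\<bar>f (x ts) - f x0\<bar> \<le> K*(K*ts)" using flip[of "x ts" x0] by linarith
      moreover have "\<bar>z ts\<bar> \<le> \<eta>/4 + \<eta>/4 + \<eta>/4"
        using zb[of ts] tspos Meb[of ts] Bab k_def by linarith
      moreover have "K*(K*ts) \<le> \<eta>/4" using ts3 by (simp add: mult.assoc)
      ultimately show "\<bar>y ts - f x0\<bar> \<le> \<eta>" unfolding z_def by linarith
    next
      fix t assume "ts < t \<and> t \<le> T"
      hence "\<bar>z t\<bar> \<le> \<eta>/4 + \<eta>/4 + \<eta>/4"
        using zb[of t] tspos Meb[of t] Bab k_def by linarith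
      thus "\<bar>y t - f (x t)\<bar> \<le> \<eta>" using assms unfolding z_def by auto
    qed
  qed
  thus ?thesis using dpos by blast
qed

end
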